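(* Let $K$ be a field and let $M,N\in M_n(K)$ be two simultaneously diagonalizable matrices. Let $t$ be drawn from the uniform distribution on a finite set $S\subset K$. Then with probability at least $1-\frac{n(n-1)}{2|S|}$, every invertible matrix $T$ such that $T^{-1}(M+tN)T$ is diagonal also satisfies that $T^{-1}MT$ and $T^{-1}NT$ are diagonal. *)

theory Defs
  imports "Jordan_Normal_Form.Matrix" "HOL-Probability.Probability_Mass_Function"
begin

definition simul_diagonalizable :: "nat \<Rightarrow> 'a::field mat \<Rightarrow> 'a mat \<Rightarrow> bool" where
  "simul_diagonalizable n M N \<longleftrightarrow>
     (\<exists>P Q. P \<in> carrier_mat n n \<and> Q \<in> carrier_mat n n \<and>
            P * Q = 1\<^sub>m n \<and> Q * P = 1\<^sub>m n \<and>
            diagonal_mat (Q * M * P) \<and> diagonal_mat (Q * N * P))"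

end

theory Submission
  imports Defs
begin

lemma diag_left:
  fixes D R :: "'a::field mat"
  assumes D: "D \<in> carrier_mat n n" "diagonal_mat D" and R: "R \<in> carrier_mat n m"
    and i: "i < n" and k: "k < m"
  shows "(D * R) $$ (i,k) = D $$ (i,i) * R $$ (i,k)"
proof -
  have "(D * R) $$ (i,k) = (\<Sum>j\<in>{0..<n}. D $$ (i,j) * R $$ (j,k))"
    using D R i k by (simp add: scalar_prod_def)
  also have "\<dots> = D $$ (i,i) * R $$ (i,k)"
    apply (subst sum.remove[of _ i]) using i apply auto[2]
    apply (subst sum.neutral) using D i unfolding diagonal_mat_def by auto
  finally show ?thesis .
qed

lemma diag_right:
  fixes E R :: "'a::field mat"
  assumes E: "E \<in> carrier_mat m m" "diagonal_mat E" and R: "R \<in> carrier_mat n m"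
    and i: "i < n" and k: "k < m"
  shows "(R * E) $$ (i,k) = R $$ (i,k) * E $$ (k,k)"
proof -
  have "(R * E) $$ (i,k) = (\<Sum>j\<in>{0..<m}. R $$ (i,j) * E $$ (j,k))"
    using E R i k by (simp add: scalar_prod_def)
  also have "\<dots> = R $$ (i,k) * E $$ (k,k)"
    apply (subst sum.remove[of _ k]) using k apply auto[2]
    apply (subst sum.neutral) using E k unfolding diagonal_mat_def by auto
  finally show ?thesis .
qed

lemma key:
  fixes D D1 R Ri :: "'a::field mat"
  assumes D: "D \<in> carrier_mat n n" "diagonal_mat D"
    and D1: "D1 \<in> carrier_mat n n" "diagonal_mat D1"
    and R: "R \<in> carrier_mat n n" and Ri: "Ri \<in> carrier_mat n n"
    and inv1: "R * Ri = 1\<^sub>m n" and inv2: "Ri * R = 1\<^sub>m n"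
    and good: "\<And>i j. i < n \<Longrightarrow> j < n \<Longrightarrow> D $$ (i,i) = D $$ (j,j) \<Longrightarrow> D1 $$ (i,i) = D1 $$ (j,j)"
    and dg: "diagonal_mat (Ri * D * R)"
  shows "diagonal_mat (Ri * D1 * R)"
proof -
  define E where "E = Ri * D * R"
  have Ec: "E \<in> carrier_mat n n" using D R Ri unfolding E_def by auto
  have c1: "Ri * D \<in> carrier_mat n n" "R * Ri \<in> carrier_mat n n" "D * R \<in> carrier_mat n n"
    "Ri * (D * R) \<in> carrier_mat n n" using D R Ri by auto
  have "R * E = R * (Ri * (D * R))" unfolding E_def using D R Ri c1 by simp
  also have "\<dots> = (R * Ri) * D * R"
    using assoc_mult_mat[OF R Ri c1(3)] assoc_mult_mat[OF c1(2) D(1) R] by simp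
  also have "\<dots> = D * R" using inv1 D by simp
  finally have RE: "R * E = D * R" .
  have eig: "D $$ (i,i) = E $$ (k,k)" if "i < n" "k < n" "R $$ (i,k) \<noteq> 0" for i k
  proof -
    have "D $$ (i,i) * R $$ (i,k) = R $$ (i,k) * E $$ (k,k)"
      using diag_left[OF D R that(1,2)] diag_right[OF Ec dg[folded E_def] R that(1,2)] RE by simp
    then show ?thesis using that(3) by (simp add: mult.commute)
  qed
  define f where "f k = (if \<exists>i<n. R $$ (i,k) \<noteq> 0 then D1 $$ (SOME i. i < n \<and> R $$ (i,k) \<noteq> 0, SOME i. i < n \<and> R $$ (i,k) \<noteq> 0) else 0)" for k
  define F where "F = Matrix.mat n n (\<lambda>(i,j). if i = j then f i else 0)"
  have Fc: "F \<in> carrier_mat n n" and Fd: "diagonal_mat F"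
    unfolding F_def diagonal_mat_def by auto
  have "D1 * R = R * F"
  proof (rule eq_matI)
    fix i k assume i: "i < dim_row (R * F)" and k: "k < dim_col (R * F)"
    then have i: "i < n" and k: "k < n" using R Fc by auto
    show "(D1 * R) $$ (i,k) = (R * F) $$ (i,k)"
    proof (cases "R $$ (i,k) = 0")
      case True then show ?thesis
        using diag_left[OF D1 R i k] diag_right[OF Fc Fd R i k] by simp
    next
      case False
      define i0 where "i0 = (SOME i. i < n \<and> R $$ (i,k) \<noteq> 0)"
      have ex: "\<exists>i. i < n \<and> R $$ (i,k) \<noteq> 0" using False i by auto
      have i0: "i0 < n \<and> R $$ (i0,k) \<noteq> 0" unfolding i0_def using someI_ex[OF ex] .
      have fk: "f k = D1 $$ (i0,i0)" unfolding f_def i0_def using ex by auto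
      have "D1 $$ (i,i) = D1 $$ (i0,i0)"
        using good[OF i] i0 eig[OF i k False] eig[of i0 k] k by auto
      moreover have "F $$ (k,k) = f k" unfolding F_def using k by simp
      ultimately show ?thesis
        using diag_left[OF D1 R i k] diag_right[OF Fc Fd R i k] fk by simp
    qed
  qed (use D1 R Fc in auto)
  moreover have "Ri * D1 \<in> carrier_mat n n" "D1 * R \<in> carrier_mat n n" "R * F \<in> carrier_mat n n" "Ri * R \<in> carrier_mat n n"
    using D1 R Ri Fc by auto
  ultimately have "Ri * D1 * R = Ri * R * F"
    using assoc_mult_mat[OF Ri D1(1) R] assoc_mult_mat[OF Ri R Fc] by simp
  also have "\<dots> = F" using inv2 Fc by simp
  finally show ?thesis using Fd by simp
qed

lemma card_bad:
  fixes a b :: "nat \<Rightarrow> 'a::field" and n :: nat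
  defines "B \<equiv> (\<Union>j\<in>{..<n}. \<Union>i\<in>{..<j}. {t. a i + t * b i = a j + t * b j \<and> (a i \<noteq> a j \<or> b i \<noteq> b j)})"
  shows "finite B \<and> card B \<le> n * (n - 1) div 2"
proof -
  have sub: "{t. a i + t * b i = a j + t * b j \<and> (a i \<noteq> a j \<or> b i \<noteq> b j)} \<subseteq> {(a j - a i) / (b i - b j)}" for i j
  proof
    fix t assume "t \<in> {t. a i + t * b i = a j + t * b j \<and> (a i \<noteq> a j \<or> b i \<noteq> b j)}"
    then have e: "a i + t * b i = a j + t * b j" and ne: "a i \<noteq> a j \<or> b i \<noteq> b j" by auto
    have "b i \<noteq> b j" using e ne by auto
    moreover have "t * (b i - b j) = a j - a i" using e by (simp add: algebra_simps)
    ultimately show "t \<in> {(a j - a i) / (b i - b j)}" by (simp add: field_simps)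
  qed
  have fin: "finite {t. a i + t * b i = a j + t * b j \<and> (a i \<noteq> a j \<or> b i \<noteq> b j)}" for i j
    using sub finite_subset by blast
  have c1: "card {t. a i + t * b i = a j + t * b j \<and> (a i \<noteq> a j \<or> b i \<noteq> b j)} \<le> 1" for i j
    using card_mono[OF _ sub[of i j]] by simp
  have "finite B" unfolding B_def using fin by auto
  have "card B \<le> (\<Sum>j\<in>{..<n}. card (\<Union>i\<in>{..<j}. {t. a i + t * b i = a j + t * b j \<and> (a i \<noteq> a j \<or> b i \<noteq> b j)}))"
    unfolding B_def by (rule card_UN_le) simp
  also have "\<dots> \<le> (\<Sum>j\<in>{..<n}. j)"
  proof (rule sum_mono)
    fix j assume "j \<in> {..<n}"
    have "card (\<Union>i\<in>{..<j}. {t. a i + t * b i = a j + t * b j \<and> (a i \<noteq> a j \<or> b i \<noteq> b j)})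
        \<le> (\<Sum>i\<in>{..<j}. card {t. a i + t * b i = a j + t * b j \<and> (a i \<noteq> a j \<or> b i \<noteq> b j)})"
      by (rule card_UN_le) simp
    also have "\<dots> \<le> (\<Sum>i\<in>{..<j}. 1)" by (rule sum_mono) (rule c1)
    finally show "card (\<Union>i\<in>{..<j}. {t. a i + t * b i = a j + t * b j \<and> (a i \<noteq> a j \<or> b i \<noteq> b j)}) \<le> j" by simp
  qed
  also have "\<dots> = n * (n - 1) div 2"
    using Sum_Ico_nat[of 0 n] by (simp add: lessThan_atLeast0)
  finally show ?thesis using \<open>finite B\<close> by simp
qed

theorem proposition2:
  fixes M N :: "'a::field mat" and n :: nat and S :: "'a set"
  assumes "M \<in> carrier_mat n n" and "N \<in> carrier_mat n n"
    and "simul_diagonalizable n M N"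
    and "finite S" and "S \<noteq> {}"
  shows "measure_pmf.prob (pmf_of_set S)
           {t. \<forall>T Ti. T \<in> carrier_mat n n \<longrightarrow> Ti \<in> carrier_mat n n \<longrightarrow>
                  T * Ti = 1\<^sub>m n \<longrightarrow> Ti * T = 1\<^sub>m n \<longrightarrow>
                  diagonal_mat (Ti * (M + t \<cdot>\<^sub>m N) * T) \<longrightarrow>
                  diagonal_mat (Ti * M * T) \<and> diagonal_mat (Ti * N * T)}
         \<ge> 1 - real (n * (n - 1)) / (2 * real (card S))"
    (is "measure_pmf.prob _ ?G \<ge> _")
proof -
  note Mc = assms(1) and Nc = assms(2)
  obtain P Q where P: "P \<in> carrier_mat n n" and Q: "Q \<in> carrier_mat n n"
    and PQ: "P * Q = 1\<^sub>m n" and QP: "Q * P = 1\<^sub>m n"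
    and d1: "diagonal_mat (Q * M * P)" and d2: "diagonal_mat (Q * N * P)"
    using assms(3) unfolding simul_diagonalizable_def by blast
  define D1 where "D1 = Q * M * P"
  define D2 where "D2 = Q * N * P"
  have D1c: "D1 \<in> carrier_mat n n" and D2c: "D2 \<in> carrier_mat n n"
    unfolding D1_def D2_def using P Q Mc Nc by auto
  define a where "a i = D1 $$ (i,i)" for i
  define b where "b i = D2 $$ (i,i)" for i
  define B where "B = (\<Union>j\<in>{..<n}. \<Union>i\<in>{..<j}. {t. a i + t * b i = a j + t * b j \<and> (a i \<noteq> a j \<or> b i \<noteq> b j)})"
  have cB: "finite B" "card B \<le> n * (n - 1) div 2"
    using card_bad[of a b n] unfolding B_def by auto
  have good: "t \<in> ?G" if tB: "t \<notin> B" for t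
  proof -
    have g: "a i = a j \<and> b i = b j" if "i < n" "j < n" "a i + t * b i = a j + t * b j" for i j
    proof -
      consider "i < j" | "i = j" | "j < i" by linarith
      then show ?thesis
      proof cases
        case 1 then show ?thesis using tB that unfolding B_def by blast
      next
        case 2 then show ?thesis by simp
      next
        case 3
        have "t \<notin> {t. a j + t * b j = a i + t * b i \<and> (a j \<noteq> a i \<or> b j \<noteq> b i)}"
          using tB that(1) 3 unfolding B_def by blast
        then show ?thesis using that(3) by auto
      qed
    qed
    define D where "D = D1 + t \<cdot>\<^sub>m D2"
    have Dc: "D \<in> carrier_mat n n" unfolding D_def using D1c D2c by auto
    have Dd: "diagonal_mat D" using d1 d2 D1c D2c unfolding D_def D1_def[symmetric] D2_def[symmetric] diagonal_mat_def by auto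
    have Dii: "D $$ (i,i) = a i + t * b i" if "i < n" for i
      unfolding D_def a_def b_def using that D1c D2c by auto
    have QDP: "Q * (M + t \<cdot>\<^sub>m N) * P = D"
    proof -
      have "Q * (M + t \<cdot>\<^sub>m N) = Q * M + Q * (t \<cdot>\<^sub>m N)"
        using mult_add_distrib_mat[OF Q Mc] Nc by auto
      also have "\<dots> = Q * M + t \<cdot>\<^sub>m (Q * N)" using mult_smult_distrib[OF Q Nc] by simp
      finally have "Q * (M + t \<cdot>\<^sub>m N) * P = (Q * M + t \<cdot>\<^sub>m (Q * N)) * P" by simp
      also have "\<dots> = Q * M * P + (t \<cdot>\<^sub>m (Q * N)) * P"
        by (rule add_mult_distrib_mat[OF _ _ P]) (use Q Mc Nc in auto)
      also have "(t \<cdot>\<^sub>m (Q * N)) * P = t \<cdot>\<^sub>m (Q * N * P)"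
        by (rule mult_smult_assoc_mat[OF _ P]) (use Q Nc in auto)
      finally show ?thesis unfolding D_def D1_def D2_def .
    qed
    show ?thesis
    proof (intro CollectI allI impI)
      fix T Ti assume T: "T \<in> carrier_mat n n" and Ti: "Ti \<in> carrier_mat n n"
        and TTi: "T * Ti = 1\<^sub>m n" and TiT: "Ti * T = 1\<^sub>m n"
        and dA: "diagonal_mat (Ti * (M + t \<cdot>\<^sub>m N) * T)"
      define R where "R = Q * T"
      define Ri where "Ri = Ti * P"
      have Rc: "R \<in> carrier_mat n n" and Ric: "Ri \<in> carrier_mat n n"
        unfolding R_def Ri_def using Q T Ti P by auto
      have conj: "Ri * (Q * X * P) * R = Ti * X * T" if Xc: "X \<in> carrier_mat n n" for X
      proof -
        have "Ri * (Q * X * P) * R = Ti * (P * Q) * X * (P * Q) * T"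
          unfolding R_def Ri_def using P Q T Ti Xc
          by (simp add: assoc_mult_mat[of _ n n _ n _ n])
        also have "\<dots> = Ti * X * T" using PQ Ti Xc by simp
        finally show ?thesis .
      qed
      have inv1: "R * Ri = 1\<^sub>m n"
      proof -
        have "R * Ri = Q * (T * Ti) * P" unfolding R_def Ri_def using P Q T Ti
          by (simp add: assoc_mult_mat[of _ n n _ n _ n])
        then show ?thesis using TTi QP Q by simp
      qed
      have inv2: "Ri * R = 1\<^sub>m n"
      proof -
        have "Ri * R = Ti * (P * Q) * T" unfolding R_def Ri_def using P Q T Ti
          by (simp add: assoc_mult_mat[of _ n n _ n _ n])
        then show ?thesis using TiT PQ Ti by simp
      qed
      have AC: "M + t \<cdot>\<^sub>m N \<in> carrier_mat n n" using Mc Nc by auto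
      have dD: "diagonal_mat (Ri * D * R)" using dA conj[OF AC] QDP by simp
      have "diagonal_mat (Ri * D1 * R)"
        by (rule key[OF Dc Dd D1c d1[folded D1_def] Rc Ric inv1 inv2 _ dD])
           (use g Dii a_def in auto)
      moreover have "diagonal_mat (Ri * D2 * R)"
        by (rule key[OF Dc Dd D2c d2[folded D2_def] Rc Ric inv1 inv2 _ dD])
           (use g Dii b_def in auto)
      ultimately show "diagonal_mat (Ti * M * T) \<and> diagonal_mat (Ti * N * T)"
        using conj[OF Mc] conj[OF Nc] unfolding D1_def D2_def by simp
    qed
  qed
  have sub: "S - B \<subseteq> S \<inter> ?G" using good by blast
  have cS: "card S \<le> card (S - B) + card B"
  proof -
    have "card S \<le> card ((S - B) \<union> B)" by (rule card_mono) (use assms(4) cB in auto)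
    also have "\<dots> \<le> card (S - B) + card B" by (rule card_Un_le)
    finally show ?thesis .
  qed
  have "card (S - B) \<le> card (S \<inter> ?G)" by (rule card_mono) (use assms(4) sub in auto)
  then have cG: "real (card S) - real (card B) \<le> real (card (S \<inter> ?G))" using cS by linarith
  have cB2: "real (card B) \<le> real (n * (n - 1)) / 2"
  proof -
    have "2 * card B \<le> n * (n - 1)" using cB(2) by linarith
    then have "2 * real (card B) \<le> real (n * (n - 1))" by (metis of_nat_le_iff of_nat_mult of_nat_numeral)
    then show ?thesis by simp
  qed
  have pos: "real (card S) > 0" using assms(4,5) by (simp add: card_gt_0_iff)
  have "measure_pmf.prob (pmf_of_set S) ?G = real (card (S \<inter> ?G)) / real (card S)"
    by (rule measure_pmf_of_set[OF assms(5,4)])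
  also have "\<dots> \<ge> (real (card S) - real (n * (n - 1)) / 2) / real (card S)"
    using cG cB2 pos by (simp add: divide_right_mono)
  ultimately have "measure_pmf.prob (pmf_of_set S) ?G \<ge> (real (card S) - real (n * (n - 1)) / 2) / real (card S)"
    by simp
  moreover have "(real (card S) - real (n * (n - 1)) / 2) / real (card S) = 1 - real (n * (n - 1)) / (2 * real (card S))"
    using pos by (simp add: field_simps)
  ultimately show ?thesis by simp
qed

end
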